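(* For any p-string $T$ of length $n$, the parameterized suffix tray $\mathsf{PSTray}(T)$ occupies $O(n)$ space (in machine words).
   Context: $\Sigma$ (static alphabet) and $\Pi$ (parameterized alphabet) are disjoint ordered alphabets, every character of $\Pi$ being smaller than every character of $\Sigma$; a p-string is a string over $\Sigma\cup\Pi$. $T$ ends with $\$\in\Sigma$, occurring nowhere else and larger than all other characters. $\Pi_T$, $\Sigma_T$ are the sets of characters of $\Pi$, $\Sigma$ occurring in $T$; $\pi=|\Pi_T|$, $\sigma=|\Sigma_T|$. For $x\in\Pi_T\cup\Sigma_T$, $\mathrm{rank}(x)$ is the rank of $x$ in $\Pi_T\cup\Sigma_T$ (so ranks lie in $\{1,\dots,\sigma+\pi\}$). Two p-strings $x,y$ of equal length p-match ($x\approx y$) if there is a bijection $f$ on $\Sigma\cup\Pi$ which is the identity on $\Sigma$ with $x[i]=f(y[i])$ for all $i$. $\mathrm{spe}(w)$ is the lexicographically smallest p-string p-matching $w$. $\mathrm{prev}(w)$ is the string of length $|w|$ with $\mathrm{prev}(w)[i]=w[i]$ if $w[i]\in\Sigma$, $0$ if $w[i]\in\Pi$ does not occur in $w[1..i-1]$, and otherwise $i-j$ for the largest $j<i$ with $w[j]=w[i]$. $\mathsf{PSTree}(T)$ is the compact trie of $\{\mathrm{prev}(T[i..]) : 1\le i\le |T|\}$ with leaves in lexicographic order. $\mathsf{PSA}(T)$ is the array with $\mathsf{PSA}(T)[i]=j$ iff $\mathrm{prev}(T[j..])$ is the $i$-th lexicographically smallest among $\{\mathrm{prev}(T[k..])\}$;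 $\mathsf{PLCP}(T)[1]=0$ and $\mathsf{PLCP}(T)[i]$ ($i\ge2$) is the length of the longest common prefix of $\mathrm{prev}(T[\mathsf{PSA}(T)[i-1]..])$ and $\mathrm{prev}(T[\mathsf{PSA}(T)[i]..])$. A node of $\mathsf{PSTree}(T)$ is a p-node if its subtree has at least $\max\{\sigma,\pi\}$ leaves, and a branching p-node if moreover at least two of its children are p-nodes. For a branching p-node $\mathrm{prev}(v)$ ($v$ a substring of $T$), its p-array $A(\mathrm{prev}(v))$ has length $\sigma+\pi$, and for each $x\in\Sigma_T\cup\Pi_T$ the entry $A(\mathrm{prev}(v))[\mathrm{rank}(x)]$ is a pointer to the child $u$ of $\mathrm{prev}(v)$ such that $\mathrm{prev}(\mathrm{spe}(v)x)$ is a prefix of (the string of) $u$, or nil if no such child exists. $\mathsf{PSTray}(T)$ consists of $\mathsf{PSA}(T)$, $\mathsf{PLCP}(T)$, and $\mathsf{PSTree}(T)$ with each branching p-node augmented by its p-array. *)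

theory Defs
  imports Main "HOL-Library.List_Lexorder" "HOL-Library.Product_Lexorder" "HOL-Library.Sublist"
begin

text \<open>Characters of p-strings: (False, k) is the k-th parameterized character (in Pi),
  (True, k) is the k-th static character (in Sigma).  With the lexicographic order on
  bool x nat every character of Pi is smaller than every character of Sigma.\<close>
type_synonym pchar = "bool \<times> nat"

abbreviation is_static :: "pchar \<Rightarrow> bool" where "is_static c \<equiv> fst c"

definition valid_pstring :: "pchar list \<Rightarrow> bool" where
  "valid_pstring T \<longleftrightarrow> T \<noteq> [] \<and> is_static (last T) \<and> (\<forall>i < length T - 1. T ! i < last T)"

text \<open>prev-encoding; an entry is either a static character (True, s) or a number (False, k),
  numbers being smaller than static characters.\<close>
definition prev :: "pchar list \<Rightarrow> pchar list" where
  "prev w = map (\<lambda>i. if is_static (w ! i) then w ! i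
                     else if w ! i \<notin> set (take i w) then (False, 0)
                     else (False, i - (GREATEST j. j < i \<and> w ! j = w ! i))) [0..<length w]"

definition pmatch :: "pchar list \<Rightarrow> pchar list \<Rightarrow> bool" where
  "pmatch x y \<longleftrightarrow> length x = length y \<and>
     (\<exists>f. bij f \<and> (\<forall>c. is_static c \<longrightarrow> f c = c) \<and> (\<forall>i < length x. x ! i = f (y ! i)))"

definition spe :: "pchar list \<Rightarrow> pchar list" where
  "spe w = (LEAST x. pmatch x w)"

text \<open>prev of the suffix T[i..] (1-indexed, 1 <= i <= |T|).\<close>
definition psuf :: "pchar list \<Rightarrow> nat \<Rightarrow> pchar list" where
  "psuf T i = prev (drop (i - 1) T)"

definition psufs :: "pchar list \<Rightarrow> pchar list set" where
  "psufs T = psuf T ` {1..length T}"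

definition PSA :: "pchar list \<Rightarrow> nat list" where
  "PSA T = sort_key (psuf T) [1..<length T + 1]"

fun lcp :: "'a list \<Rightarrow> 'a list \<Rightarrow> nat" where
  "lcp (x # xs) (y # ys) = (if x = y then Suc (lcp xs ys) else 0)"
| "lcp _ _ = 0"

definition PLCP :: "pchar list \<Rightarrow> nat list" where
  "PLCP T = map (\<lambda>i. if i = 0 then 0
                     else lcp (psuf T (PSA T ! (i - 1))) (psuf T (PSA T ! i))) [0..<length T]"

text \<open>Nodes of PSTree(T), the compact trie of psufs T, identified with their strings:
  the root, the leaves, and the branching internal nodes.\<close>
definition PSTree_nodes :: "pchar list \<Rightarrow> pchar list set" where
  "PSTree_nodes T = {[]} \<union> psufs T \<union>
     {u. \<exists>a b. a \<noteq> b \<and> (\<exists>s\<in>psufs T. prefix (u @ [a]) s) \<and> (\<exists>s\<in>psufs T. prefix (u @ [b]) s)}"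

definition children :: "pchar list \<Rightarrow> pchar list \<Rightarrow> pchar list set" where
  "children T u = {w \<in> PSTree_nodes T. strict_prefix u w \<and>
      \<not> (\<exists>z \<in> PSTree_nodes T. strict_prefix u z \<and> strict_prefix z w)}"

definition leaf_count :: "pchar list \<Rightarrow> pchar list \<Rightarrow> nat" where
  "leaf_count T u = card {s \<in> psufs T. prefix u s}"

definition sigmaT :: "pchar list \<Rightarrow> nat" where
  "sigmaT T = card {c \<in> set T. is_static c}"

definition piT :: "pchar list \<Rightarrow> nat" where
  "piT T = card {c \<in> set T. \<not> is_static c}"

definition is_pnode :: "pchar list \<Rightarrow> pchar list \<Rightarrow> bool" where
  "is_pnode T u \<longleftrightarrow> u \<in> PSTree_nodes T \<and> leaf_count T u \<ge> max (sigmaT T) (piT T)"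

definition is_branching_pnode :: "pchar list \<Rightarrow> pchar list \<Rightarrow> bool" where
  "is_branching_pnode T u \<longleftrightarrow> is_pnode T u \<and> 2 \<le> card {w \<in> children T u. is_pnode T w}"

text \<open>Characters of T in rank order: the list entry at position rank(x) - 1 corresponds to x.\<close>
definition alphabet :: "pchar list \<Rightarrow> pchar list" where
  "alphabet T = sorted_list_of_set (set T)"

text \<open>p-array of node u = prev(v); entries are pointers to children (Some node) or nil (None).\<close>
definition parray :: "pchar list \<Rightarrow> pchar list \<Rightarrow> pchar list option list" where
  "parray T u = map (\<lambda>x.
      let v = (SOME v. (\<exists>i j. v = take j (drop i T)) \<and> prev v = u);
          key = prev (spe v @ [x])
      in if \<exists>w \<in> children T u. prefix key w
         then Some (THE w. w \<in> children T u \<and> prefix key w) else None) (alphabet T)"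

text \<open>Space of PSTray(T) in machine words: one word per entry of PSA and PLCP, one
  (constant) record per node of the tree, and one word per p-array entry of each branching
  p-node.\<close>
definition PSTray_space :: "pchar list \<Rightarrow> nat" where
  "PSTray_space T = length (PSA T) + length (PLCP T) + card (PSTree_nodes T)
     + (\<Sum>u \<in> {u. is_branching_pnode T u}. length (parray T u))"

end

theory Submission
  imports Defs
begin


definition LS :: "'a list set \<Rightarrow> 'a list \<Rightarrow> 'a list set" where
  "LS S u = {s\<in>S. prefix u s}"
definition BR :: "nat \<Rightarrow> 'a list set \<Rightarrow> 'a list set" where
  "BR m S = {u. \<exists>a b. a \<noteq> b \<and> m \<le> card (LS S (u@[a])) \<and> m \<le> card (LS S (u@[b]))}"
definition TS :: "'a \<Rightarrow> 'a list set \<Rightarrow> 'a list set" where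
  "TS c S = {t. c#t \<in> S}"

lemma LS_Cons: "LS S (c#v) = Cons c ` LS (TS c S) v"
  unfolding LS_def TS_def by (auto simp: image_iff prefix_def)

lemma card_LS_Cons: "card (LS S (c#v)) = card (LS (TS c S) v)"
  unfolding LS_Cons by (simp add: card_image)

lemma LS_Nil: "LS S [] = S" by (simp add: LS_def)

lemma BR_Cons: "(c#v \<in> BR m S) = (v \<in> BR m (TS c S))"
  unfolding BR_def by (simp add: card_LS_Cons[where v="_ @ _", simplified])

lemma BR_Nil: "([] \<in> BR m S) = (\<exists>a b. a \<noteq> b \<and> m \<le> card (TS a S) \<and> m \<le> card (TS b S))"
  unfolding BR_def by (simp add: card_LS_Cons LS_Nil)

lemma finite_TS: "finite S \<Longrightarrow> finite (TS c S)"
  unfolding TS_def by (rule finite_vimageI[where h="Cons c", unfolded vimage_def]) auto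

lemma BR_card: assumes "finite S" "u \<in> BR m S" shows "2*m \<le> card S"
proof -
  obtain a b where ab: "a \<noteq> b" "m \<le> card (LS S (u@[a]))" "m \<le> card (LS S (u@[b]))"
    using assms(2) unfolding BR_def by blast
  have d: "LS S (u@[a]) \<inter> LS S (u@[b]) = {}" using ab(1)
    unfolding LS_def by (auto dest: prefix_same_cases)
  have "card (LS S (u@[a]) \<union> LS S (u@[b])) \<le> card S"
    by (rule card_mono[OF assms(1)]) (auto simp: LS_def)
  moreover have "card (LS S (u@[a]) \<union> LS S (u@[b])) = card (LS S (u@[a])) + card (LS S (u@[b]))"
    by (rule card_Un_disjoint) (use assms(1) d in \<open>auto simp: LS_def\<close>)
  ultimately show ?thesis using ab by simp
qed

lemma finite_BR: assumes "finite S" "0 < m" shows "finite (BR m S)"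
proof -
  have "BR m S \<subseteq> (\<Union>s\<in>S. set (prefixes s))"
  proof
    fix u assume "u \<in> BR m S"
    then obtain a where "m \<le> card (LS S (u@[a]))" unfolding BR_def by blast
    with assms have "LS S (u@[a]) \<noteq> {}" by auto
    then obtain s where "s \<in> S" "prefix (u@[a]) s" unfolding LS_def by auto
    then have "prefix u s" by (metis append_assoc prefix_def)
    then show "u \<in> (\<Union>s\<in>S. set (prefixes s))" using \<open>s \<in> S\<close> by auto
  qed
  then show ?thesis using assms by (meson finite_UN_I finite_set finite_subset)
qed

lemma BR_main:
  assumes m: "0 < m"
  shows "\<forall>S. finite S \<longrightarrow> (\<forall>s\<in>S. length s \<le> k) \<longrightarrow> BR m S \<noteq> {} \<longrightarrow> (card (BR m S) + 1) * m \<le> card S"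
proof (induction k)
  case 0
  { fix S :: "'a list set" and u assume "\<forall>s\<in>S. length s \<le> 0" "u \<in> BR m S"
    then obtain a where "m \<le> card (LS S (u@[a]))" unfolding BR_def by blast
    moreover have "LS S (u@[a]) = {}" using \<open>\<forall>s\<in>S. length s \<le> 0\<close>
      by (auto simp: LS_def dest: prefix_length_le)
    ultimately have False using m by simp }
  then show ?case by blast
next
  case (Suc k)
  show ?case
  proof (intro allI impI)
    fix S :: "'a list set"
    assume fS: "finite S" and len: "\<forall>s\<in>S. length s \<le> Suc k" and ne: "BR m S \<noteq> {}"
    define H where "H = {c. m \<le> card (TS c S)}"
    define g where "g c = card (BR m (TS c S))" for c
    have fT: "finite (TS c S)" for c using finite_TS[OF fS] .
    have lenT: "\<forall>s\<in>TS c S. length s \<le> k" for c using len by (auto simp: TS_def)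
    have IH: "c \<in> H \<Longrightarrow> (g c + 1) * m \<le> card (TS c S)" for c
    proof (cases "BR m (TS c S) = {}")
      case True
      assume "c \<in> H" then show ?thesis using True by (simp add: H_def g_def)
    next
      case False
      then show ?thesis using Suc.IH fT lenT unfolding g_def by blast
    qed
    have HS: "H \<subseteq> hd ` S"
    proof
      fix c assume "c \<in> H"
      then have "TS c S \<noteq> {}" using m by (auto simp: H_def)
      then obtain t where "c#t \<in> S" by (auto simp: TS_def)
      then show "c \<in> hd ` S" by force
    qed
    have fH: "finite H" by (rule finite_subset[OF HS]) (simp add: fS)
    have BReq: "BR m S = (if [] \<in> BR m S then {[]} else {}) \<union> (\<Union>c\<in>H. Cons c ` BR m (TS c S))"
    proof (rule set_eqI)
      fix u show "u \<in> BR m S \<longleftrightarrow> u \<in> (if [] \<in> BR m S then {[]} else {}) \<union> (\<Union>c\<in>H. Cons c ` BR m (TS c S))"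
      proof (cases u)
        case Nil then show ?thesis by auto
      next
        case (Cons c v)
        have "v \<in> BR m (TS c S) \<Longrightarrow> c \<in> H"
          using BR_card[OF fT] m unfolding H_def by fastforce
        then show ?thesis using Cons by (auto simp: BR_Cons)
      qed
    qed
    have cardU: "card (\<Union>c\<in>H. Cons c ` BR m (TS c S)) = (\<Sum>c\<in>H. g c)"
      by (subst card_UN_disjoint) (auto simp: fH finite_BR[OF fT m] g_def card_image)
    have cardT: "(\<Sum>c\<in>H. card (TS c S)) \<le> card S"
    proof -
      have "card (\<Union>c\<in>H. Cons c ` TS c S) = (\<Sum>c\<in>H. card (TS c S))"
        by (subst card_UN_disjoint) (auto simp: fH fT card_image)
      moreover have "(\<Union>c\<in>H. Cons c ` TS c S) \<subseteq> S" by (auto simp: TS_def)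
      moreover have "card (\<Union>c\<in>H. Cons c ` TS c S) \<le> card S" by (rule card_mono[OF fS]) fact
      ultimately show ?thesis by linarith
    qed
    have sumIH: "(\<Sum>c\<in>H. (g c + 1) * m) \<le> card S"
      using le_trans[OF sum_mono[of H "\<lambda>c. (g c + 1) * m" "\<lambda>c. card (TS c S)"] cardT] IH by blast
    have sumeq: "(\<Sum>c\<in>H. (g c + 1) * m) = m * (\<Sum>c\<in>H. g c) + m * card H"
      by (simp add: sum.distrib sum_distrib_left algebra_simps)
    show "(card (BR m S) + 1) * m \<le> card S"
    proof (cases "[] \<in> BR m S")
      case True
      then obtain a b where "a \<noteq> b" "a \<in> H" "b \<in> H" unfolding BR_Nil H_def by blast
      then have "{a,b} \<subseteq> H" by blast
      then have "card {a,b} \<le> card H" using fH by (rule card_mono[rotated])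
      then have "2 \<le> card H" using \<open>a \<noteq> b\<close> by simp
      have "card (BR m S) = 1 + (\<Sum>c\<in>H. g c)"
        apply (subst BReq) using True cardU
        by (subst card_Un_disjoint) (auto simp: fH finite_BR[OF fT m])
      then have e: "(card (BR m S) + 1) * m = m * 2 + m * (\<Sum>c\<in>H. g c)" by (simp add: algebra_simps)
      have "m * 2 \<le> m * card H" using \<open>2 \<le> card H\<close> by (rule mult_le_mono2)
      then show ?thesis using sumIH sumeq e by linarith
    next
      case False
      then have "card (BR m S) = (\<Sum>c\<in>H. g c)" using BReq cardU by simp
      moreover have "H \<noteq> {}" using BReq False ne by auto
      then have "1 \<le> card H" using fH by (simp add: Suc_leI card_gt_0_iff)
      ultimately have e: "(card (BR m S) + 1) * m = m * 1 + m * (\<Sum>c\<in>H. g c)" by (simp add: algebra_simps)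
      have "m * 1 \<le> m * card H" using \<open>1 \<le> card H\<close> by (rule mult_le_mono2)
      then show ?thesis using sumIH sumeq e by linarith
    qed
  qed
qed

lemma BR_bound: assumes "finite S" "0 < m" shows "card (BR m S) * m \<le> card S"
proof (cases "BR m S = {}")
  case True then show ?thesis by simp
next
  case False
  obtain k where "\<forall>s\<in>S. length s \<le> k"
    using assms(1) by (metis finite_imageI finite_nat_set_iff_bounded_le image_eqI)
  then have "(card (BR m S) + 1) * m \<le> card S" using BR_main[OF assms(2)] assms(1) False by blast
  then show ?thesis by simp
qed



lemma prefix_common: "prefix u (as@b#bs) \<Longrightarrow> prefix u (as@c#cs) \<Longrightarrow> b \<noteq> c \<Longrightarrow> prefix u as"
  by (induction as arbitrary: u) (auto simp: prefix_Cons)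

lemma finite_psufs: "finite (psufs T)" by (simp add: psufs_def)
lemma card_psufs: "card (psufs T) \<le> length T"
  unfolding psufs_def using card_image_le[of "{1..length T}" "psuf T"] by simp

lemma node_prefix:
  assumes "T \<noteq> []" "w \<in> PSTree_nodes T" shows "\<exists>s\<in>psufs T. prefix w s"
proof -
  have "psufs T \<noteq> {}" using assms(1) by (simp add: psufs_def Suc_le_eq)
  then show ?thesis using assms(2) unfolding PSTree_nodes_def
    by (auto dest: prefix_snocD simp: strict_prefix_def)
qed

lemma nodes_sub: "PSTree_nodes T \<subseteq> {[]} \<union> psufs T \<union> BR 1 (psufs T)"
proof
  fix u assume "u \<in> PSTree_nodes T"
  moreover
  { assume "\<exists>a b. a \<noteq> b \<and> (\<exists>s\<in>psufs T. prefix (u @ [a]) s) \<and> (\<exists>s\<in>psufs T. prefix (u @ [b]) s)"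
    then obtain a b where ab: "a \<noteq> b" "\<exists>s\<in>psufs T. prefix (u @ [a]) s" "\<exists>s\<in>psufs T. prefix (u @ [b]) s" by blast
    have "LS (psufs T) (u@[a]) \<noteq> {}" "LS (psufs T) (u@[b]) \<noteq> {}" using ab by (auto simp: LS_def)
    moreover have "finite (LS (psufs T) (u@[x]))" for x by (simp add: LS_def finite_psufs)
    ultimately have "1 \<le> card (LS (psufs T) (u@[a]))" "1 \<le> card (LS (psufs T) (u@[b]))"
      by (simp_all add: Suc_le_eq card_gt_0_iff)
    then have "u \<in> BR 1 (psufs T)" using ab(1) unfolding BR_def by blast }
  ultimately show "u \<in> {[]} \<union> psufs T \<union> BR 1 (psufs T)" unfolding PSTree_nodes_def by blast
qed

lemma card_nodes: "card (PSTree_nodes T) \<le> 1 + 2 * length T"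
proof -
  have f: "finite ({[]} \<union> psufs T \<union> BR 1 (psufs T))"
    by (simp add: finite_psufs finite_BR)
  have "card (PSTree_nodes T) \<le> card ({[]} \<union> psufs T \<union> BR 1 (psufs T))"
    by (rule card_mono[OF f nodes_sub])
  also have "\<dots> \<le> card {[]::pchar list} + card (psufs T) + card (BR 1 (psufs T))"
    by (meson add_le_mono card_Un_le le_trans order_refl)
  also have "\<dots> \<le> 1 + length T + length T"
    using BR_bound[OF finite_psufs, of 1 T] card_psufs[of T] by simp
  finally show ?thesis by simp
qed

lemma bp_sub:
  assumes "T \<noteq> []"
  shows "{u. is_branching_pnode T u} \<subseteq> BR (max (sigmaT T) (piT T)) (psufs T)"
proof
  fix u assume "u \<in> {u. is_branching_pnode T u}"
  then have bp: "2 \<le> card {w \<in> children T u. is_pnode T w}"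
    unfolding is_branching_pnode_def by simp
  define A where "A = {w \<in> children T u. is_pnode T w}"
  have "card A \<noteq> 0" using bp A_def by simp
  then have "finite A" by (meson card.infinite)
  then have "\<not> (\<forall>a\<in>A. \<forall>b\<in>A. a = b)" using bp A_def card_le_Suc0_iff_eq[of A] by auto
  then obtain w1 w2 where w: "w1 \<in> A" "w2 \<in> A" "w1 \<noteq> w2" by blast
  have c1: "w1 \<in> PSTree_nodes T" "strict_prefix u w1"
      "\<not> (\<exists>z \<in> PSTree_nodes T. strict_prefix u z \<and> strict_prefix z w1)"
    using w(1) by (auto simp: A_def children_def)
  have c2: "w2 \<in> PSTree_nodes T" "strict_prefix u w2"
      "\<not> (\<exists>z \<in> PSTree_nodes T. strict_prefix u z \<and> strict_prefix z w2)"
    using w(2) by (auto simp: A_def children_def)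
  have "\<not> prefix w1 w2" using c1 c2 w(3) by (auto simp: strict_prefix_def)
  moreover have "\<not> prefix w2 w1" using c1 c2 w(3) by (auto simp: strict_prefix_def)
  ultimately have "w1 \<parallel> w2" by blast
  then obtain as b bs c cs where d: "b \<noteq> c" "w1 = as @ b # bs" "w2 = as @ c # cs"
    using parallel_decomp by blast
  have pu: "prefix u as" using prefix_common[of u as b bs c cs] c1(2) c2(2) d
    by (auto simp: strict_prefix_def)
  obtain s1 where s1: "s1 \<in> psufs T" "prefix w1 s1" using node_prefix[OF assms c1(1)] by blast
  obtain s2 where s2: "s2 \<in> psufs T" "prefix w2 s2" using node_prefix[OF assms c2(1)] by blast
  have "w1 = (as@[b])@bs" "w2 = (as@[c])@cs" using d by simp_all
  then have "prefix (as@[b]) w1" "prefix (as@[c]) w2" by (metis prefixI)+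
  then have "prefix (as@[b]) s1" "prefix (as@[c]) s2" using s1(2) s2(2) prefix_order.trans by blast+
  then have asn: "as \<in> PSTree_nodes T" unfolding PSTree_nodes_def using d(1) s1(1) s2(1) by blast
  have "strict_prefix as w1" using d by (simp add: strict_prefix_def prefix_def)
  then have "u = as" using c1(3) asn pu by (auto simp: strict_prefix_def)
  have lc: "max (sigmaT T) (piT T) \<le> leaf_count T w" if "w \<in> A" for w
    using that by (simp add: A_def is_pnode_def)
  have sub: "{s \<in> psufs T. prefix w s} \<subseteq> LS (psufs T) (u@[x])" if "prefix (u@[x]) w" for w x
    using that by (auto simp: LS_def intro: prefix_order.trans)
  have fl: "finite (LS (psufs T) v)" for v by (simp add: LS_def finite_psufs)
  have "max (sigmaT T) (piT T) \<le> card (LS (psufs T) (u@[b]))"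
    using lc[OF w(1)] card_mono[OF fl sub[of b w1]] \<open>u = as\<close> d unfolding leaf_count_def
    by (simp add: prefix_def)
  moreover have "max (sigmaT T) (piT T) \<le> card (LS (psufs T) (u@[c]))"
    using lc[OF w(2)] card_mono[OF fl sub[of c w2]] \<open>u = as\<close> d unfolding leaf_count_def
    by (simp add: prefix_def)
  ultimately show "u \<in> BR (max (sigmaT T) (piT T)) (psufs T)" using d(1) unfolding BR_def by blast
qed

theorem mainTheorem2:
  shows "\<exists>c::nat. \<forall>T. valid_pstring T \<longrightarrow> PSTray_space T \<le> c * length T"
proof (intro exI allI impI)
  fix T assume v: "valid_pstring T"
  then have ne: "T \<noteq> []" by (simp add: valid_pstring_def)
  define M where "M = max (sigmaT T) (piT T)"
  have "last T \<in> {c \<in> set T. is_static c}" using v ne by (simp add: valid_pstring_def)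
  then have "{c \<in> set T. is_static c} \<noteq> {}" by blast
  then have "1 \<le> sigmaT T" unfolding sigmaT_def by (simp add: Suc_le_eq card_gt_0_iff)
  then have M1: "0 < M" by (simp add: M_def)
  have cs: "card (set T) \<le> 2 * M"
  proof -
    have "set T = {c \<in> set T. is_static c} \<union> {c \<in> set T. \<not> is_static c}" by auto
    then have "card (set T) \<le> sigmaT T + piT T"
      unfolding sigmaT_def piT_def by (metis card_Un_le)
    then show ?thesis by (simp add: M_def)
  qed
  define B where "B = {u. is_branching_pnode T u}"
  have cB: "card B * M \<le> length T"
  proof -
    have "card B \<le> card (BR M (psufs T))"
      using bp_sub[OF ne] finite_BR[OF finite_psufs M1] unfolding B_def M_def
      by (simp add: card_mono)
    then have "card B * M \<le> card (BR M (psufs T)) * M" by simp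
    also have "\<dots> \<le> length T" using BR_bound[OF finite_psufs[of T] M1] card_psufs[of T] by linarith
    finally show ?thesis .
  qed
  have sumeq: "(\<Sum>u \<in> B. length (parray T u)) = card B * card (set T)"
    by (simp add: parray_def alphabet_def)
  have "card B * card (set T) \<le> card B * (2 * M)" using cs by simp
  moreover have "card B * (2 * M) = 2 * (card B * M)" by simp
  moreover have "2 * (card B * M) \<le> 2 * length T" using cB by simp
  ultimately have s2: "(\<Sum>u \<in> B. length (parray T u)) \<le> 2 * length T" using sumeq by linarith
  have lPSA: "length (PSA T) = length T" unfolding PSA_def by (simp only: length_sort length_upt diff_add_inverse2)
  have lPLCP: "length (PLCP T) = length T" by (simp add: PLCP_def)
  have "PSTray_space T \<le> length T + length T + (1 + 2 * length T) + 2 * length T"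
    unfolding PSTray_space_def B_def[symmetric]
    using card_nodes[of T] s2 lPSA lPLCP by linarith
  also have "\<dots> \<le> 7 * length T"
  proof -
    have "1 \<le> length T" using ne by (simp add: Suc_le_eq)
    then show ?thesis by linarith
  qed
  finally show "PSTray_space T \<le> 7 * length T" .
qed


end
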